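(* Let $\alpha\ge2$, $h,\ell,t\ge1$, $\varepsilon\ge0$ be integers with $h-\varepsilon\ge2\ell$, and let $\mathcal T$ be a finite family of subspaces of $\mathbb F_q^{(h-\varepsilon)t}$ with $|\mathcal T|\ge\alpha$ such that each member has dimension at most $\ell t$ and any $\alpha$ members span $\mathbb F_q^{(h-\varepsilon)t}$. Then $\alpha\ell\ge h-\varepsilon$ and $$|\mathcal T|\le\Big(\Big\lfloor\tfrac{h-\varepsilon}{\ell}\Big\rfloor-2\Big)+\Big(\alpha-\Big\lfloor\tfrac{h-\varepsilon}{\ell}\Big\rfloor+1\Big)\frac{q^{\ell t+1}-1}{q-1}.$$
   Context: "Any $\alpha$ members" means any $\alpha$ members with distinct indices in the family. *)

theory Defs
  imports "HOL-Analysis.Cartesian_Space"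
begin

end

theory Submission
  imports Defs "HOL-Library.FuncSet"
begin

definition fw :: "'a::field ^ 'n \<Rightarrow> 'a ^ 'n \<Rightarrow> 'a" where
  "fw w x = (\<Sum>i\<in>UNIV. w $ i * x $ i)"

lemma fw_add: "fw w (x + y) = fw w x + fw w y"
  by (simp add: fw_def sum.distrib distrib_left)
lemma fw_scale: "fw w (c *s x) = c * fw w x"
  by (simp add: fw_def sum_distrib_left algebra_simps)
lemma fw_diff: "fw (w1 - w2) x = fw w1 x - fw w2 x"
  by (simp add: fw_def sum_subtractf algebra_simps)
lemma fw_smult: "fw (c *s w) x = c * fw w x"
  by (simp add: fw_def sum_distrib_left algebra_simps)
lemma fw_axis: "fw w (axis i 1) = w $ i"
  by (simp add: fw_def axis_def if_distrib sum.delta cong: if_cong)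

lemma fw_span:
  assumes "\<And>x. x \<in> X \<Longrightarrow> fw w x = 0" "y \<in> vec.span X"
  shows "fw w y = 0"
proof -
  have "vec.subspace {x. fw w x = 0}"
    unfolding vec.subspace_def by (auto simp add: fw_add fw_scale) (simp add: fw_def)
  then have "vec.span X \<subseteq> {x. fw w x = 0}"
    using assms(1) by (intro vec.span_minimal) auto
  then show ?thesis using assms(2) by auto
qed

lemma fw_zero_all:
  assumes "\<And>x. fw w x = 0" shows "w = 0"
  using assms[of "axis _ 1"] by (simp add: fw_axis vec_eq_iff)

lemma ann_exists:
  fixes X :: "('a::{field,finite} ^ 'n) set"
  assumes "finite X" "card X < CARD('n)"
  shows "\<exists>w. w \<noteq> 0 \<and> (\<forall>y\<in>vec.span X. fw w y = 0)"
proof -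
  define g where "g w = restrict (fw w) X" for w :: "'a^'n"
  have "g ` UNIV \<subseteq> PiE X (\<lambda>_. UNIV)" by (auto simp: g_def)
  moreover have "card (PiE X (\<lambda>_. UNIV::'a set)) = CARD('a) ^ card X"
    using assms(1) by (simp add: card_PiE)
  moreover have "CARD('a) ^ card X < CARD('a) ^ CARD('n)"
  proof -
    have "card {0::'a, 1} = 2" by simp
    then have "CARD('a) \<ge> 2"
      using card_mono[of UNIV "{0::'a,1}"] by simp
    then show ?thesis using assms(2) by (intro power_strict_increasing) auto
  qed
  ultimately have "\<not> inj g"
    by (metis CARD_vec card_image card_mono finite_PiE finite assms(1) not_le)
  then obtain w1 w2 where "w1 \<noteq> w2" "g w1 = g w2" unfolding inj_def by blast
  then have "\<forall>x\<in>X. fw (w1 - w2) x = 0"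
    by (auto simp: fw_diff g_def restrict_def fun_eq_iff split: if_splits)
  then show ?thesis using \<open>w1 \<noteq> w2\<close> fw_span
    by (metis right_minus_eq)
qed


lemma ann_card:
  fixes E :: "('a::{field,finite} ^ 'n) set"
  assumes "vec.span E = UNIV" "finite E" "B \<subseteq> E"
  shows "card {w. \<forall>x\<in>B. fw w x = 0} \<le> CARD('a) ^ card (E - B)"
proof -
  let ?A = "{w. \<forall>x\<in>B. fw w x = 0}"
  define g where "g w = restrict (fw w) (E - B)" for w :: "'a^'n"
  have "inj_on g ?A"
  proof (rule inj_onI)
    fix w1 w2 assume w: "w1 \<in> ?A" "w2 \<in> ?A" "g w1 = g w2"
    have "\<forall>x\<in>E. fw (w1 - w2) x = 0"
    proof
      fix x assume "x \<in> E"
      show "fw (w1 - w2) x = 0"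
      proof (cases "x \<in> B")
        case True then show ?thesis using w by (simp add: fw_diff)
      next
        case False
        then have "g w1 x = g w2 x" using w by simp
        then show ?thesis using False \<open>x \<in> E\<close> by (simp add: g_def fw_diff)
      qed
    qed
    then have "\<And>y. fw (w1 - w2) y = 0" using fw_span assms(1) by blast
    then show "w1 = w2" using fw_zero_all by (metis right_minus_eq)
  qed
  moreover have "g ` ?A \<subseteq> PiE (E - B) (\<lambda>_. UNIV)" unfolding g_def by (intro image_subsetI restrict_PiE) auto
  ultimately have "card ?A \<le> card (PiE (E - B) (\<lambda>_. UNIV::'a set))"
    using assms(2) by (intro card_inj_on_le) auto
  also have "\<dots> = CARD('a) ^ card (E - B)"
    using assms(2) by (simp add: card_PiE)
  finally show ?thesis .
qed

lemma fiber_count: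
  assumes "finite D" "finite Y" "\<phi> ` D \<subseteq> Y" "\<And>y. y \<in> Y \<Longrightarrow> card {x\<in>D. \<phi> x = y} \<le> b"
  shows "card D \<le> card Y * b"
proof -
  have "D = (\<Union>y\<in>Y. {x\<in>D. \<phi> x = y})" using assms(3) by auto
  then have "card D = card (\<Union>y\<in>Y. {x\<in>D. \<phi> x = y})" by (rule arg_cong)
  also have "\<dots> \<le> (\<Sum>y\<in>Y. card {x\<in>D. \<phi> x = y})"
    by (rule card_UN_le[OF assms(2)])
  also have "\<dots> \<le> (\<Sum>y\<in>Y. b)" by (intro sum_mono assms(4))
  finally show ?thesis by simp
qed


theorem mainTheorem11:
  fixes a h l t e :: nat
    and I :: "'i set"
    and T :: "'i \<Rightarrow> ('a::{field,finite} ^ 'n) set"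
  assumes "a \<ge> 2" and "h \<ge> 1" and "l \<ge> 1" and "t \<ge> 1"
    and "h \<ge> e + 2 * l"
    and "CARD('n) = (h - e) * t"
    and "finite I" and "card I \<ge> a"
    and "\<And>i. i \<in> I \<Longrightarrow> vec.subspace (T i)"
    and "\<And>i. i \<in> I \<Longrightarrow> vec.dim (T i) \<le> l * t"
    and "\<And>J. J \<subseteq> I \<Longrightarrow> card J = a \<Longrightarrow> vec.span (\<Union>i\<in>J. T i) = UNIV"
  shows "a * l \<ge> h - e
    \<and> real (card I) \<le> (real ((h - e) div l) - 2)
        + (real a - real ((h - e) div l) + 1)
          * ((real CARD('a) ^ (l * t + 1) - 1) / (real CARD('a) - 1))"
proof -
  note A = assms
  define N where "N = h - e"
  define n where "n = CARD('n)"
  define m where "m = N div l"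
  define k where "k = l * t"
  define q where "q = CARD('a)"
  have n_eq: "n = N * t" using A(6) by (simp add: n_def N_def)
  have k1: "k \<ge> 1" using A(3,4) by (simp add: k_def)
  have q2: "q \<ge> 2"
  proof -
    have "card {0::'a, 1} = 2" by simp
    then show ?thesis using card_mono[of UNIV "{0::'a,1}"] by (simp add: q_def)
  qed
  have "\<exists>D. finite D \<and> D \<subseteq> T i \<and> card D \<le> k \<and> T i \<subseteq> vec.span D" if "i \<in> I" for i
  proof -
    obtain D where "D \<subseteq> T i" "vec.independent D" "T i \<subseteq> vec.span D" "card D = vec.dim (T i)"
      using vec.basis_exists by blast
    then show ?thesis using A(10)[OF that] vec.finiteI_independent by (auto simp: k_def)
  qed
  then obtain D where D: "\<And>i. i \<in> I \<Longrightarrow> finite (D i)" "\<And>i. i \<in> I \<Longrightarrow> D i \<subseteq> T i"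
      "\<And>i. i \<in> I \<Longrightarrow> card (D i) \<le> k" "\<And>i. i \<in> I \<Longrightarrow> T i \<subseteq> vec.span (D i)"
    by metis
  have spanD: "vec.span (T i) \<subseteq> vec.span (D i)" if "i \<in> I" for i
    using D(4)[OF that] by (simp add: vec.span_minimal)
  have UNcard: "card (\<Union>i\<in>J. D i) \<le> card J * k" if "J \<subseteq> I" for J
  proof -
    have "card (\<Union>i\<in>J. D i) \<le> (\<Sum>i\<in>J. card (D i))" by (rule card_UN_le) (use that A(7) finite_subset in blast)
    also have "\<dots> \<le> (\<Sum>i\<in>J. k)" using D(3) that by (intro sum_mono) auto
    finally show ?thesis by simp
  qed
  have UNfin: "finite (\<Union>i\<in>J. D i)" if "J \<subseteq> I" for J
    using that A(7) D(1) by (meson finite_UN_I finite_subset subsetD)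
  obtain J0 where J0: "J0 \<subseteq> I" "card J0 = a" using obtain_subset_with_card_n[OF A(8)] by metis
  have "UNIV = vec.span (\<Union>i\<in>J0. T i)" using A(11)[OF J0] by simp
  also have "\<dots> \<subseteq> vec.span (\<Union>i\<in>J0. D i)"
  proof (rule vec.span_minimal)
    show "(\<Union>i\<in>J0. T i) \<subseteq> vec.span (\<Union>i\<in>J0. D i)"
      using D(4) J0(1) vec.span_mono by blast
  qed simp
  finally have "n \<le> card (\<Union>i\<in>J0. D i)"
    using vec.dim_le_card[OF _ UNfin[OF J0(1)], of UNIV] vec_dim_card[where 'a='a and 'n='n] by (simp add: n_def)
  moreover have "card (\<Union>i\<in>J0. D i) \<le> a * l * t" using UNcard[OF J0(1)] J0(2) by (simp add: k_def mult.assoc)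
  ultimately have "N * t \<le> (a * l) * t" using n_eq by (metis le_trans)
  then have part1: "N \<le> a * l" using A(4) mult_le_cancel2[of N t "a * l"] by simp
  have "2 * l \<le> N" using A(5) by (simp add: N_def)
  then have "2 * l div l \<le> N div l" by (rule div_le_mono)
  then have m2: "m \<ge> 2" using A(3) by (simp add: m_def)
  have ml: "m * l \<le> N" by (simp add: m_def)
  have "m * l \<le> a * l" using ml part1 by linarith
  then have am: "m \<le> a" using A(3) by simp
  have mk: "m * k \<le> n" using ml n_eq by (simp add: k_def)
  obtain P where P: "P \<subseteq> I" "card P = m - 2"
  proof -
    have "m - 2 \<le> card I" using A(8) am by linarith
    then show ?thesis using obtain_subset_with_card_n[of "m - 2" I] that by blast
  qed
  define DP where "DP = (\<Union>i\<in>P. D i)"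
  have DPfin: "finite DP" and DPcard: "card DP \<le> (m-2) * k"
    using UNfin[OF P(1)] UNcard[OF P(1)] P(2) by (auto simp: DP_def)
  obtain B0 where B0: "B0 \<subseteq> DP" "vec.independent B0" "DP \<subseteq> vec.span B0"
    using vec.maximal_independent_subset by blast
  have B0card: "card B0 \<le> (m-2) * k" using card_mono[OF DPfin B0(1)] DPcard by simp
  obtain E where E: "B0 \<subseteq> E" "vec.independent E" "UNIV \<subseteq> vec.span E"
    using vec.maximal_independent_subset_extend[OF subset_UNIV B0(2)] by metis
  have Efin: "finite E" using E(2) vec.finiteI_independent by blast
  have Ecard: "card E = n" using vec.basis_card_eq_dim[of E UNIV] E vec_dim_card[where 'a='a and 'n='n] by (simp add: n_def)
  have "m * k = (m-2)*k + 2*k" using m2 by (metis le_add_diff_inverse2 add_mult_distrib)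
  then have "(m-2)*k + k + 1 \<le> n" using mk k1 by linarith
  then have le1: "card B0 + (k + 1) \<le> n" using B0card by linarith
  have cEB0: "card (E - B0) = n - card B0" using Efin E(1) Ecard by (simp add: card_Diff_subset finite_subset)
  have "n - k - 1 - card B0 \<le> card (E - B0)" using cEB0 le1 by linarith
  then obtain X where X: "X \<subseteq> E - B0" "card X = n - k - 1 - card B0" "finite X"
    by (rule obtain_subset_with_card_n)
  define BU where "BU = B0 \<union> X"
  have BUE: "BU \<subseteq> E" using X E(1) by (auto simp: BU_def)
  have BUcard: "card BU = n - k - 1"
  proof -
    have "card BU = card B0 + card X" unfolding BU_def
      using X(1,3) Efin E(1) by (intro card_Un_disjoint) (auto intro: finite_subset)
    then show ?thesis using X(2) le1 by linarith
  qed
  have cEBU: "card (E - BU) = k + 1"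
    using Efin BUE Ecard BUcard le1 by (simp add: card_Diff_subset finite_subset)
  have BUfin: "finite BU" using BUE Efin finite_subset by blast
  define Aset where "Aset = {w. \<forall>x\<in>BU. fw w x = 0}"
  have Acard: "card Aset \<le> q ^ (k + 1)"
    using ann_card[of E BU] E(3) Efin BUE cEBU by (auto simp: Aset_def q_def)
  have Afin: "finite Aset" by simp
  have zeroA: "0 \<in> Aset" by (simp add: Aset_def fw_def)
  have Pann: "fw w x = 0" if "w \<in> Aset" "i \<in> P" "x \<in> T i" for w i x
  proof -
    have "D i \<subseteq> vec.span BU"
      using that(2) B0(3) vec.span_mono[of B0 BU] by (auto simp: DP_def BU_def)
    then have "vec.span (D i) \<subseteq> vec.span BU" by (simp add: vec.span_minimal)
    then have "x \<in> vec.span BU" using D(4) P(1) that(2,3) by blast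
    then show ?thesis using fw_span[of BU w x] that(1) by (auto simp: Aset_def)
  qed
  define R where "R = I - P"
  have Rfin: "finite R" using A(7) by (simp add: R_def)
  have cardI: "card I = (m - 2) + card R"
    using P A(7) card_mono[OF A(7) P(1)] by (simp add: R_def card_Diff_subset finite_subset)
  have key: "card {j\<in>R. \<forall>x\<in>T j. fw w x = 0} \<le> a - m + 1" if "w \<in> Aset" "w \<noteq> 0" for w
  proof (rule ccontr)
    let ?Q0 = "{j\<in>R. \<forall>x\<in>T j. fw w x = 0}"
    assume "\<not> ?thesis"
    then have "a - m + 2 \<le> card ?Q0" by linarith
    then obtain Q where Q: "Q \<subseteq> ?Q0" "card Q = a - m + 2" "finite Q"
      by (rule obtain_subset_with_card_n)
    have PQ: "P \<inter> Q = {}" using Q(1) by (auto simp: R_def)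
    have "card (P \<union> Q) = a"
      using card_Un_disjoint[OF _ Q(3) PQ] P A(7) finite_subset am m2 Q(2) by fastforce
    moreover have "P \<union> Q \<subseteq> I" using P(1) Q(1) by (auto simp: R_def)
    ultimately have sp: "vec.span (\<Union>i\<in>P \<union> Q. T i) = UNIV" using A(11) by blast
    have "\<forall>x\<in>(\<Union>i\<in>P \<union> Q. T i). fw w x = 0" using Pann[OF that(1)] Q(1) by blast
    then have "\<And>y. fw w y = 0" using fw_span sp by blast
    then show False using fw_zero_all that(2) by blast
  qed
  have "\<exists>w. w \<noteq> 0 \<and> w \<in> Aset \<and> (\<forall>x\<in>T j. fw w x = 0)" if "j \<in> R" for j
  proof -
    have jI: "j \<in> I" using that by (simp add: R_def)
    have fin: "finite (BU \<union> D j)" using BUfin D(1)[OF jI] by simp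
    have "card (BU \<union> D j) \<le> card BU + card (D j)" by (rule card_Un_le)
    also have "\<dots> \<le> n - k - 1 + k" using BUcard D(3)[OF jI] by simp
    finally have "card (BU \<union> D j) < CARD('n)" using le1 by (simp add: n_def)
    then obtain w where w: "w \<noteq> 0" "\<forall>y\<in>vec.span (BU \<union> D j). fw w y = 0"
      using ann_exists[OF fin] by blast
    have "BU \<subseteq> vec.span (BU \<union> D j)" by (meson Un_upper1 vec.span_superset subset_trans)
    then have "w \<in> Aset" using w(2) by (auto simp: Aset_def)
    moreover have "T j \<subseteq> vec.span (BU \<union> D j)"
      using D(4)[OF jI] vec.span_mono[of "D j" "BU \<union> D j"] by blast
    ultimately show ?thesis using w by blast
  qed
  then obtain W where W: "\<And>j. j \<in> R \<Longrightarrow> W j \<noteq> 0" "\<And>j. j \<in> R \<Longrightarrow> W j \<in> Aset"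
      "\<And>j x. j \<in> R \<Longrightarrow> x \<in> T j \<Longrightarrow> fw (W j) x = 0"
    by metis
  define NZ where "NZ = (UNIV - {0::'a})"
  define \<phi> where "\<phi> p = snd p *s W (fst p)" for p :: "'i \<times> 'a"
  have phi_eq: "\<phi> (j, c) = c *s W j" for j c by (simp add: \<phi>_def)
  have cnt: "card (R \<times> NZ) \<le> card (Aset - {0}) * (a - m + 1)"
  proof (rule fiber_count)
    show "finite (R \<times> NZ)" using Rfin by simp
    show "finite (Aset - {0})" by simp
    show "\<phi> ` (R \<times> NZ) \<subseteq> Aset - {0}"
    proof clarify
      fix j c assume jc: "j \<in> R" "c \<in> NZ"
      show "\<phi> (j, c) \<in> Aset - {0}"
        using W(1,2)[OF jc(1)] jc(2) by (auto simp: phi_eq NZ_def Aset_def fw_smult)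
    qed
    fix w assume w: "w \<in> Aset - {0}"
    let ?F = "{p \<in> R \<times> NZ. \<phi> p = w}"
    have "inj_on fst ?F"
    proof (rule inj_onI)
      fix p p' assume pp: "p \<in> ?F" "p' \<in> ?F" "fst p = fst p'"
      obtain j c where p: "p = (j, c)" by force
      obtain j' c' where p': "p' = (j', c')" by force
      have "j' = j" using pp(3) p p' by simp
      have "c *s W j = c' *s W j" using pp p p' \<open>j' = j\<close> by (simp add: phi_eq)
      then have "c = c'" using W(1) pp(1) p by auto
      then show "p = p'" using p p' \<open>j' = j\<close> by simp
    qed
    moreover have "fst ` ?F \<subseteq> {j\<in>R. \<forall>x\<in>T j. fw w x = 0}"
    proof
      fix j assume "j \<in> fst ` ?F"
      then obtain c where "(j, c) \<in> ?F" by force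
      then have "j \<in> R" "w = c *s W j" by (auto simp: phi_eq)
      then show "j \<in> {j\<in>R. \<forall>x\<in>T j. fw w x = 0}" using W(3) by (simp add: fw_smult)
    qed
    ultimately have "card ?F \<le> card {j\<in>R. \<forall>x\<in>T j. fw w x = 0}"
      using card_image[of fst ?F] card_mono[of "{j\<in>R. \<forall>x\<in>T j. fw w x = 0}" "fst ` ?F"] Rfin by simp
    also have "\<dots> \<le> a - m + 1" using key w by blast
    finally show "card ?F \<le> a - m + 1" .
  qed
  have cNZ: "card NZ = q - 1" by (simp add: NZ_def q_def card_Diff_subset)
  have cA0: "card (Aset - {0}) \<le> q ^ (k+1) - 1" using Acard zeroA by (simp add: card_Diff_singleton)
  have main: "card R * (q - 1) \<le> (a - m + 1) * (q ^ (k+1) - 1)"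
  proof -
    have "card R * (q - 1) = card (R \<times> NZ)" using cNZ by (simp add: card_cartesian_product)
    also have "\<dots> \<le> card (Aset - {0}) * (a - m + 1)" by (rule cnt)
    also have "\<dots> \<le> (q ^ (k+1) - 1) * (a - m + 1)" using cA0 by (rule mult_le_mono1)
    finally show ?thesis by (simp add: mult.commute)
  qed
  have qpos: "real q - 1 > 0" using q2 by simp
  have q1: "q ^ (k+1) \<ge> 1" using q2 by simp
  have "real (card R) * (real q - 1) \<le> real (a - m + 1) * (real q ^ (k+1) - 1)"
  proof -
    have "real (card R * (q - 1)) \<le> real ((a - m + 1) * (q ^ (k+1) - 1))" using main by (rule of_nat_mono)
    moreover have "real (q - 1) = real q - 1" using q2 by simp
    moreover have "real (q ^ (k+1) - 1) = real q ^ (k+1) - 1" using q1 by (simp add: of_nat_diff)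
    ultimately show ?thesis by (simp only: of_nat_mult)
  qed
  then have r0: "real (card R) \<le> real (a - m + 1) * ((real q ^ (k+1) - 1) / (real q - 1))"
    using qpos by (simp add: field_simps)
  have e1: "real (a - m + 1) = real a - real m + 1" using am by simp
  have r1: "real (card R) \<le> (real a - real m + 1) * ((real q ^ (k+1) - 1) / (real q - 1))"
    using r0 unfolding e1 .
  have "real (card I) = real m - 2 + real (card R)" using cardI m2 by simp
  then have "real (card I) \<le> (real m - 2) + (real a - real m + 1) * ((real q ^ (k+1) - 1) / (real q - 1))"
    using r1 by linarith
  then show ?thesis using part1 by (simp add: m_def N_def q_def k_def)
qed

end
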